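(* Let $m,n\ge1$ be integers, $A=(a_{ij})$ an $n\times m$ real matrix and $q_{\max}>1$. Let $\gamma$ be such that every $m$-tuple $q_1,\dots,q_m$ returned by the ILLL-algorithm on input $A,q_{\max}$ satisfies $q^{\frac{m}{n}}\max_i\|q_1a_{i1}+\dots+q_ma_{im}\|>\gamma$, where $q=\max_j|q_j|$. Put $$\delta=2^{-\frac{(m+n)(m^2+m(3n-1)+4n+2n^2)}{4n^2}}\,m^{-\frac{m}{2n}}\,n^{-\frac12}\,\gamma^{\frac{m+n}{n}}.$$ Then every $m$-tuple of integers $s_1,\dots,s_m$ with $s=\max_j|s_j|$ and $$2^{\frac{(m+n-1)n}{4m}}\left(\frac{n\delta^2}{m}\right)^{\frac{n}{2(m+n)}}<s<2^{-\frac{m^2+m(n-1)+4n}{4m}}\left(\frac{n\delta^2}{m}\right)^{\frac{n}{2(m+n)}}q_{\max}$$ satisfies $s^{\frac{m}{n}}\max_i\|s_1a_{i1}+\dots+s_ma_{im}\|>\delta$.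
   Context: $\|x\|$ denotes the distance from $x\in\mathbb R$ to the nearest integer. A basis $b_1,\dots,b_r$ of $\mathbb R^r$ with Gram–Schmidt vectors $b_i^*=b_i-\sum_{j<i}\mu_{ij}b_j^*$, $\mu_{ij}=(b_i,b_j^* )/(b_j^*,b_j^* )$, is reduced if $|\mu_{ij}|\le\frac12$ ($j<i$) and $|b_i^*+\mu_{i,i-1}b_{i-1}^*|^2\ge\frac34|b_{i-1}^*|^2$ ($1<i\le r$); the LLL-algorithm returns a reduced basis of the lattice generated by its input basis. The ILLL-algorithm on input $A$ and $q_{\max}>1$: put $k'=\left\lceil -\frac{(m+n-1)(m+n)}{4n}+\frac{m\log_2 q_{\max}}{n}\right\rceil$ and, for $k\ge1$, $c(k)=\left(2^{-\frac{m+n+3}{4}-k+1}\right)^{\frac{m+n}{m}}$. Start with the basis given by the columns of $B=\begin{pmatrix} I_n & A\\ 0& c(1)I_m\end{pmatrix}$. In iteration $k=1,\dots,k'$: apply the LLL-algorithm to the current basis; from the first vector of the reduced basis, which has the form $(q_1a_{11}+\dots+q_ma_{1m}-p_1,\dots,q_1a_{n1}+\dots+q_ma_{nm}-p_n,c(k)q_1,\dots,c(k)q_m)^T$ with $p_i,q_j\in\mathbb Z$, output the $m$-tuple $q(k)=(q_1,\dots,q_m)$; then divide the last $m$ coordinates of all basis vectors by $2^{\frac{m+n}{m}}$. The $m$-tuples returned are $q(1),\dots,q(k')$. *)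

theory Defs
  imports Complex_Main
begin

text \<open>Vectors of R^r are functions nat => real (only coordinates < r matter);
  a family of r vectors is b :: nat => (nat => real), vector i is b i for i < r.
  Coordinates are 0-based.\<close>

definition ip :: "nat \<Rightarrow> (nat \<Rightarrow> real) \<Rightarrow> (nat \<Rightarrow> real) \<Rightarrow> real" where
  "ip r x y = (\<Sum>t<r. x t * y t)"

fun gso :: "nat \<Rightarrow> (nat \<Rightarrow> nat \<Rightarrow> real) \<Rightarrow> nat \<Rightarrow> nat \<Rightarrow> real" where
  "gso r b i = (\<lambda>t. b i t -
     (\<Sum>j\<in>{..<i}. (ip r (b i) (gso r b j) / ip r (gso r b j) (gso r b j)) * gso r b j t))"

declare gso.simps [simp del]

definition gs_mu :: "nat \<Rightarrow> (nat \<Rightarrow> nat \<Rightarrow> real) \<Rightarrow> nat \<Rightarrow> nat \<Rightarrow> real" where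
  "gs_mu r b i j = ip r (b i) (gso r b j) / ip r (gso r b j) (gso r b j)"

definition reduced :: "nat \<Rightarrow> (nat \<Rightarrow> nat \<Rightarrow> real) \<Rightarrow> bool" where
  "reduced r b \<longleftrightarrow>
     (\<forall>i<r. \<forall>j<i. \<bar>gs_mu r b i j\<bar> \<le> 1/2) \<and>
     (\<forall>i. 1 \<le> i \<and> i < r \<longrightarrow>
        ip r (\<lambda>t. gso r b i t + gs_mu r b i (i-1) * gso r b (i-1) t)
             (\<lambda>t. gso r b i t + gs_mu r b i (i-1) * gso r b (i-1) t)
        \<ge> 3/4 * ip r (gso r b (i-1)) (gso r b (i-1)))"

definition lattice :: "nat \<Rightarrow> (nat \<Rightarrow> nat \<Rightarrow> real) \<Rightarrow> (nat \<Rightarrow> real) set" where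
  "lattice r b = {v. \<exists>c::nat \<Rightarrow> int. v = (\<lambda>t. \<Sum>i<r. of_int (c i) * b i t)}"

definition dnint :: "real \<Rightarrow> real" where
  "dnint x = \<bar>x - of_int (round x)\<bar>"

definition kprime :: "nat \<Rightarrow> nat \<Rightarrow> real \<Rightarrow> int" where
  "kprime m n qmax = \<lceil>- (real (m+n) - 1) * real (m+n) / (4 * real n)
                       + real m * log 2 qmax / real n\<rceil>"

definition cfac :: "nat \<Rightarrow> nat \<Rightarrow> nat \<Rightarrow> real" where
  "cfac m n k = (2 powr (- (real (m+n) + 3) / 4 - real k + 1)) powr (real (m+n) / real m)"

text \<open>Initial basis: columns of [[I_n, A],[0, c(1) I_m]]; column i is vector i.\<close>
definition init_basis :: "nat \<Rightarrow> nat \<Rightarrow> (nat \<Rightarrow> nat \<Rightarrow> real) \<Rightarrow> nat \<Rightarrow> nat \<Rightarrow> real" where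
  "init_basis m n A i t =
     (if i < n then (if t = i then 1 else 0)
      else if t < n then A t (i - n)
      else if t < n + m \<and> t = i then cfac m n 1 else 0)"

definition scale_basis :: "nat \<Rightarrow> nat \<Rightarrow> (nat \<Rightarrow> nat \<Rightarrow> real) \<Rightarrow> nat \<Rightarrow> nat \<Rightarrow> real" where
  "scale_basis m n b i t = (if n \<le> t then b i t / 2 powr (real (m+n) / real m) else b i t)"

text \<open>A run of the ILLL-algorithm on input A, qmax: L k is the reduced basis returned
  by the LLL-algorithm in iteration k (1 \<le> k \<le> k'), and qs k is the m-tuple q(k) output
  in iteration k.  Any admissible output of the LLL step is allowed.\<close>
definition ILLL_run :: "nat \<Rightarrow> nat \<Rightarrow> (nat \<Rightarrow> nat \<Rightarrow> real) \<Rightarrow> real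
     \<Rightarrow> (nat \<Rightarrow> nat \<Rightarrow> nat \<Rightarrow> real) \<Rightarrow> (nat \<Rightarrow> nat \<Rightarrow> int) \<Rightarrow> bool" where
  "ILLL_run m n A qmax L qs \<longleftrightarrow>
     (\<forall>k. 1 \<le> k \<and> int k \<le> kprime m n qmax \<longrightarrow>
        reduced (m+n) (L k) \<and>
        lattice (m+n) (L k) =
          lattice (m+n) (if k = 1 then init_basis m n A else scale_basis m n (L (k-1))) \<and>
        (\<exists>p::nat \<Rightarrow> int. \<forall>t<m+n.
           L k 0 t = (if t < n then (\<Sum>j<m. of_int (qs k j) * A t j) - of_int (p t)
                      else cfac m n k * of_int (qs k (t - n)))))"

end

theory Submission
  imports Defs "Jordan_Normal_Form.Determinant"
begin


lemma ip_sym: "ip r x y = ip r y x"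
  unfolding ip_def by (simp add: mult.commute)

lemma ip_add_left: "ip r (\<lambda>t. x t + y t) z = ip r x z + ip r y z"
  unfolding ip_def by (simp add: algebra_simps sum.distrib)

lemma ip_diff_left: "ip r (\<lambda>t. x t - y t) z = ip r x z - ip r y z"
  unfolding ip_def by (simp add: algebra_simps sum_subtractf)

lemma ip_scale_left: "ip r (\<lambda>t. a * x t) z = a * ip r x z"
  unfolding ip_def by (simp add: algebra_simps sum_distrib_left)

lemma ip_sum_left: "ip r (\<lambda>t. \<Sum>j\<in>J. f j t) z = (\<Sum>j\<in>J. ip r (f j) z)"
  unfolding ip_def by (simp add: sum_distrib_right sum.swap[of _ J])

lemma ip_nonneg: "ip r x x \<ge> 0"
  unfolding ip_def by (simp add: sum_nonneg)

lemma ip_zero_imp: "ip r x x = 0 \<Longrightarrow> t < r \<Longrightarrow> x t = 0"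
  unfolding ip_def by (simp add: sum_nonneg_eq_0_iff)

lemma ip_zero_right: "ip r x x = 0 \<Longrightarrow> ip r y x = 0"
  using ip_zero_imp[of r x] unfolding ip_def by (simp)

lemma gso_eq: "gso r b i t = b i t - (\<Sum>j<i. gs_mu r b i j * gso r b j t)"
  by (subst gso.simps) (simp add: gs_mu_def)

lemma gso_eq_fun: "gso r b i = (\<lambda>t. b i t - (\<Sum>j<i. gs_mu r b i j * gso r b j t))"
  using gso_eq by blast

lemma b_decomp: "b i t = gso r b i t + (\<Sum>j<i. gs_mu r b i j * gso r b j t)"
  using gso_eq[of r b i t] by simp

lemma gso_orth_aux: "\<forall>i j. i < N \<and> j < i \<longrightarrow> ip r (gso r b i) (gso r b j) = 0"
proof (induction N)
  case 0 then show ?case by simp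
next
  case (Suc N)
  show ?case
  proof (intro allI impI)
    fix i j assume h: "i < Suc N \<and> j < i"
    show "ip r (gso r b i) (gso r b j) = 0"
    proof (cases "i < N")
      case True then show ?thesis using Suc h by blast
    next
      case False
      then have iN: "i = N" using h by simp
      have orth: "\<And>l. l < i \<Longrightarrow> l \<noteq> j \<Longrightarrow> ip r (gso r b l) (gso r b j) = 0"
      proof -
        fix l assume l: "l < i" "l \<noteq> j"
        show "ip r (gso r b l) (gso r b j) = 0"
        proof (cases "j < l")
          case True then show ?thesis using Suc l iN by blast
        next
          case False then have "l < j" using l by simp
          then show ?thesis using Suc h iN ip_sym by metis
        qed
      qed
      have "ip r (gso r b i) (gso r b j) =
          ip r (b i) (gso r b j) - (\<Sum>l<i. gs_mu r b i l * ip r (gso r b l) (gso r b j))"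
        by (subst gso_eq_fun) (simp add: ip_diff_left ip_sum_left ip_scale_left)
      also have "(\<Sum>l<i. gs_mu r b i l * ip r (gso r b l) (gso r b j))
          = gs_mu r b i j * ip r (gso r b j) (gso r b j)"
        by (rule sum.remove[where x=j, THEN trans]) (use h orth in auto)
      finally show ?thesis
        by (cases "ip r (gso r b j) (gso r b j) = 0")
           (auto simp: gs_mu_def ip_zero_right)
    qed
  qed
qed

lemma gso_orth: "j < i \<Longrightarrow> ip r (gso r b i) (gso r b j) = 0"
  using gso_orth_aux[of "Suc i" r b] by blast

lemma gso_orth': "i \<noteq> j \<Longrightarrow> ip r (gso r b i) (gso r b j) = 0"
  by (metis gso_orth ip_sym nat_neq_iff)

lemma ip_expand: "ip r (\<lambda>t. x t + a * y t) (\<lambda>t. x t + a * y t)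
   = ip r x x + 2 * a * ip r x y + a^2 * ip r y y"
  unfolding ip_def by (simp add: algebra_simps power2_eq_square sum.distrib sum_distrib_left)

lemma gso_0: "gso r b 0 = b 0"
  by (subst gso.simps) simp

lemma reduced_step:
  assumes "reduced r b" "1 \<le> i" "i < r"
  shows "ip r (gso r b (i-1)) (gso r b (i-1)) \<le> 2 * ip r (gso r b i) (gso r b i)"
proof -
  let ?g = "gso r b i" and ?h = "gso r b (i-1)" and ?mu = "gs_mu r b i (i-1)"
  have mu: "\<bar>?mu\<bar> \<le> 1/2" using assms unfolding reduced_def by auto
  have mu2: "?mu^2 \<le> 1/4"
  proof -
    have "?mu^2 = \<bar>?mu\<bar>^2" by simp
    also have "\<dots> \<le> (1/2)^2" using mu by (intro power_mono) auto
    finally show ?thesis by (simp add: power2_eq_square)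
  qed
  have c: "ip r (\<lambda>t. ?g t + ?mu * ?h t) (\<lambda>t. ?g t + ?mu * ?h t) \<ge> 3/4 * ip r ?h ?h"
    using assms unfolding reduced_def by auto
  have o: "ip r ?g ?h = 0" using gso_orth[of "i-1" i r b] assms by simp
  have "ip r ?g ?g + ?mu^2 * ip r ?h ?h \<ge> 3/4 * ip r ?h ?h"
    using c unfolding ip_expand o by simp
  moreover have "?mu^2 * ip r ?h ?h \<le> 1/4 * ip r ?h ?h"
    using mu2 ip_nonneg[of r ?h] by (intro mult_right_mono) auto
  ultimately show ?thesis by linarith
qed

lemma reduced_chain:
  assumes "reduced r b" "i < r"
  shows "ip r (b 0) (b 0) \<le> 2^i * ip r (gso r b i) (gso r b i)"
  using assms(2)
proof (induction i)
  case 0 then show ?case by (simp add: gso_0)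
next
  case (Suc i)
  have "ip r (b 0) (b 0) \<le> 2^i * ip r (gso r b i) (gso r b i)" using Suc by simp
  also have "\<dots> \<le> 2^i * (2 * ip r (gso r b (Suc i)) (gso r b (Suc i)))"
    using reduced_step[OF assms(1), of "Suc i"] Suc by (intro mult_left_mono) auto
  finally show ?case by simp
qed

lemma b_gso_ip:
  assumes "i \<le> j"
  shows "ip r (b i) (gso r b j) = (if i = j then ip r (gso r b j) (gso r b j) else 0)"
proof -
  have "ip r (b i) (gso r b j) = ip r (gso r b i) (gso r b j)
      + (\<Sum>l<i. gs_mu r b i l * ip r (gso r b l) (gso r b j))"
    by (subst b_decomp[abs_def]) (simp add: ip_add_left ip_sum_left ip_scale_left)
  also have "(\<Sum>l<i. gs_mu r b i l * ip r (gso r b l) (gso r b j)) = 0"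
    using assms by (intro sum.neutral) (auto simp: gso_orth')
  finally show ?thesis using assms by (auto simp: gso_orth')
qed

lemma lll_short:
  assumes red: "reduced r b"
    and x: "x = (\<lambda>t. \<Sum>i<r. of_int (c i) * b i t)"
    and nz: "\<exists>i<r. c i \<noteq> 0"
  shows "ip r (b 0) (b 0) \<le> 2^(r-1) * ip r x x"
proof -
  define J where "J = Max {i. i < r \<and> c i \<noteq> 0}"
  have fin: "finite {i. i < r \<and> c i \<noteq> 0}" by simp
  have J: "J < r" "c J \<noteq> 0" using Max_in[OF fin] nz unfolding J_def by auto
  have Jmax: "\<And>i. i < r \<Longrightarrow> J < i \<Longrightarrow> c i = 0"
  proof (rule ccontr)
    fix i assume "i < r" "J < i" "c i \<noteq> 0"
    then have "i \<le> J" using Max_ge[OF fin] unfolding J_def by auto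
    then show False using \<open>J < i\<close> by simp
  qed
  let ?g = "gso r b J"
  have x2: "x = (\<lambda>t. \<Sum>i\<in>{..J}. of_int (c i) * b i t)"
    unfolding x
  proof (intro ext sum.mono_neutral_right)
    show "{..J} \<subseteq> {..<r}" using J by auto
  qed (use Jmax in auto)
  have ixg: "ip r x ?g = of_int (c J) * ip r ?g ?g"
  proof -
    have "ip r x ?g = (\<Sum>i\<in>{..J}. of_int (c i) * ip r (b i) ?g)"
      unfolding x2 by (simp add: ip_sum_left ip_scale_left)
    also have "\<dots> = of_int (c J) * ip r (b J) ?g"
      by (rule sum.remove[where x=J, THEN trans]) (auto simp: b_gso_ip intro!: sum.neutral)
    finally show ?thesis by (simp add: b_gso_ip)
  qed
  define y where "y = (\<lambda>t. x t - of_int (c J) * ?g t)"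
  have xy: "x = (\<lambda>t. y t + of_int (c J) * ?g t)" unfolding y_def by simp
  have yg: "ip r y ?g = 0" unfolding y_def ip_diff_left ip_scale_left ixg by simp
  have "ip r x x = ip r y y + (of_int (c J))^2 * ip r ?g ?g"
    by (subst xy, subst xy) (simp add: ip_expand yg)
  also have "\<dots> \<ge> (of_int (c J))^2 * ip r ?g ?g" using ip_nonneg[of r y] by simp
  finally have 1: "(of_int (c J))^2 * ip r ?g ?g \<le> ip r x x" .
  have "(1::real) \<le> (of_int (c J))^2"
  proof -
    have a: "1 \<le> \<bar>c J\<bar>" using J(2) by arith
    have "(1::int) \<le> \<bar>c J\<bar>^2" using a by (rule one_le_power)
    then have "(1::int) \<le> (c J)^2" by simp
    then have "(1::real) \<le> of_int ((c J)^2)" by linarith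
    then show ?thesis by simp
  qed
  then have 2: "ip r ?g ?g \<le> ip r x x"
    using 1 ip_nonneg[of r ?g] mult_right_mono[of 1 "(of_int (c J))^2" "ip r ?g ?g"] by simp
  have "ip r (b 0) (b 0) \<le> 2^J * ip r ?g ?g" using reduced_chain[OF red J(1)] .
  also have "\<dots> \<le> 2^(r-1) * ip r ?g ?g"
    using J(1) ip_nonneg[of r ?g] by (intro mult_right_mono power_increasing) auto
  also have "\<dots> \<le> 2^(r-1) * ip r x x" using 2 by simp
  finally show ?thesis .
qed



definition Bm :: "nat \<Rightarrow> (nat \<Rightarrow> nat \<Rightarrow> real) \<Rightarrow> real mat" where
  "Bm r b = mat r r (\<lambda>(t,i). b i t)"

lemma mat_mult_entry:
  assumes "i < r" "j < r"
  shows "(mat r r f * mat r r g) $$ (i,j) = (\<Sum>l<r. f (i,l) * g (l,j))"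
  using assms by (simp add: scalar_prod_def atLeast0LessThan)

lemma Bm_carrier[simp]: "Bm r b \<in> carrier_mat r r" unfolding Bm_def by simp

lemma det_gso:
  "(det (Bm r b))^2 = (\<Prod>i<r. ip r (gso r b i) (gso r b i))"
proof -
  define G where "G = mat r r (\<lambda>(t,i). gso r b i t)"
  define T where "T = mat r r (\<lambda>(j,i). if j < i then gs_mu r b i j else if j = i then 1 else (0::real))"
  have GC: "G \<in> carrier_mat r r" and TC: "T \<in> carrier_mat r r" unfolding G_def T_def by auto
  have BGT: "Bm r b = G * T"
  proof (rule eq_matI)
    fix t i assume ti: "t < dim_row (G * T)" "i < dim_col (G * T)"
    then have t: "t < r" and i: "i < r" using GC TC by auto
    have "(G * T) $$ (t,i) = (\<Sum>j<r. gso r b j t * (if j < i then gs_mu r b i j else if j = i then 1 else 0))"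
      unfolding G_def T_def using t i by (subst mat_mult_entry) auto
    also have "\<dots> = (\<Sum>j\<in>{..<i} \<union> {i} \<union> {Suc i..<r}. gso r b j t * (if j < i then gs_mu r b i j else if j = i then 1 else 0))"
      using i by (intro sum.cong) auto
    also have "\<dots> = (\<Sum>j<i. gso r b j t * gs_mu r b i j) + gso r b i t"
      by (subst sum.union_disjoint, force, force, force)+ (auto intro!: sum.neutral)
    also have "\<dots> = b i t" using b_decomp[of b i t r] by (simp add: mult.commute)
    finally show "Bm r b $$ (t,i) = (G * T) $$ (t,i)" unfolding Bm_def using t i by simp
  qed (use GC TC in \<open>auto simp: Bm_def\<close>)
  have detT: "det T = 1"
  proof -
    have "upper_triangular T" unfolding T_def upper_triangular_def by auto
    then have "det T = prod_list (diag_mat T)" using det_upper_triangular TC by blast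
    also have "\<dots> = 1" unfolding prod_list_diag_prod T_def by (auto intro: prod.neutral)
    finally show ?thesis .
  qed
  have "det (Bm r b) = det G" unfolding BGT using det_mult[OF GC TC] detT by simp
  moreover have "(det G)^2 = (\<Prod>i<r. ip r (gso r b i) (gso r b i))"
  proof -
    have GG: "transpose_mat G * G \<in> carrier_mat r r" using GC by auto
    have "det (transpose_mat G * G) = det (transpose_mat G) * det G"
      using det_mult[of "transpose_mat G" r G] GC by auto
    also have "\<dots> = (det G)^2" using det_transpose[OF GC] by (simp add: power2_eq_square)
    finally have 1: "(det G)^2 = det (transpose_mat G * G)" by simp
    have ent: "(transpose_mat G * G) $$ (i,j) = ip r (gso r b i) (gso r b j)" if "i < r" "j < r" for i j
      using that GC unfolding G_def by (simp add: scalar_prod_def ip_def atLeast0LessThan)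
    have "upper_triangular (transpose_mat G * G)"
      unfolding upper_triangular_def using GC ent gso_orth by auto
    then have "det (transpose_mat G * G) = prod_list (diag_mat (transpose_mat G * G))"
      using det_upper_triangular GG by blast
    also have "\<dots> = (\<Prod>i<r. ip r (gso r b i) (gso r b i))"
      unfolding prod_list_diag_prod using GC ent by (auto simp: atLeast0LessThan intro!: prod.cong)
    finally show ?thesis using 1 by simp
  qed
  ultimately show ?thesis by simp
qed

lemma lattice_mem_self: "i < r \<Longrightarrow> b i \<in> Defs.lattice r b"
  unfolding Defs.lattice_def mem_Collect_eq
proof (intro exI[of _ "\<lambda>l. if l = i then 1 else 0"] ext)
  fix t assume i: "i < r"
  have "(\<Sum>l<r. real_of_int (if l = i then 1 else 0) * b l t) = (\<Sum>l<r. if l = i then b l t else 0)"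
    by (rule sum.cong) auto
  also have "\<dots> = b i t" using i by simp
  finally show "b i t = (\<Sum>l<r. real_of_int (if l = i then 1 else 0) * b l t)" by simp
qed

lemma lattice_basis_change:
  assumes "Defs.lattice r b = Defs.lattice r b'"
  obtains U :: "int mat" where "U \<in> carrier_mat r r" "Bm r b = Bm r b' * map_mat of_int U"
proof -
  have "\<forall>i<r. \<exists>c::nat\<Rightarrow>int. b i = (\<lambda>t. \<Sum>l<r. of_int (c l) * b' l t)"
    using lattice_mem_self[of _ r b] assms unfolding Defs.lattice_def by blast
  then obtain C where C: "\<And>i. i < r \<Longrightarrow> b i = (\<lambda>t. \<Sum>l<r. of_int (C i l) * b' l t)"
    by metis
  define U where "U = mat r r (\<lambda>(l,i). C i l)"
  have "Bm r b = Bm r b' * map_mat of_int U"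
  proof (rule eq_matI)
    fix t i assume "t < dim_row (Bm r b' * map_mat of_int U)" "i < dim_col (Bm r b' * map_mat of_int U)"
    then have t: "t < r" and i: "i < r" unfolding U_def Bm_def by auto
    have "map_mat of_int U = mat r r (\<lambda>(l,i). real_of_int (C i l))"
      unfolding U_def by (rule eq_matI) auto
    then have "(Bm r b' * map_mat of_int U) $$ (t,i) = (\<Sum>l<r. b' l t * of_int (C i l))"
      unfolding Bm_def using t i by (simp add: scalar_prod_def atLeast0LessThan)
    also have "\<dots> = b i t" using C[OF i] by (simp add: mult.commute)
    finally show "Bm r b $$ (t,i) = (Bm r b' * map_mat of_int U) $$ (t,i)"
      unfolding Bm_def using t i by simp
  qed (auto simp: Bm_def U_def)
  then show ?thesis using that[of U] unfolding U_def by auto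
qed

lemma lattice_det:
  assumes "Defs.lattice r b = Defs.lattice r b'" "det (Bm r b') \<noteq> 0"
  shows "(det (Bm r b))^2 = (det (Bm r b'))^2"
proof -
  obtain U where U: "U \<in> carrier_mat r r" "Bm r b = Bm r b' * map_mat of_int U"
    using lattice_basis_change[OF assms(1)] by blast
  obtain V where V: "V \<in> carrier_mat r r" "Bm r b' = Bm r b * map_mat of_int V"
    using lattice_basis_change[OF assms(1)[symmetric]] by blast
  have dU: "det (Bm r b) = det (Bm r b') * of_int (det U)"
    using U det_mult[of "Bm r b'" r "map_mat of_int U"] by (simp add: of_int_hom.hom_det)
  have dV: "det (Bm r b') = det (Bm r b) * of_int (det V)"
    using V det_mult[of "Bm r b" r "map_mat of_int V"] by (simp add: of_int_hom.hom_det)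
  have "real_of_int (det U * det V) = 1"
    using dU dV assms(2) by (simp add: field_simps)
  then have "det U * det V = 1" by (metis of_int_eq_1_iff)
  then have "(det U)^2 = 1" by (auto simp: zmult_eq_1_iff)
  then have "(real_of_int (det U))^2 = 1" by (metis of_int_1 of_int_power)
  then show ?thesis using dU by (simp add: power_mult_distrib)
qed



definition initc :: "nat \<Rightarrow> nat \<Rightarrow> (nat \<Rightarrow> nat \<Rightarrow> real) \<Rightarrow> real \<Rightarrow> nat \<Rightarrow> nat \<Rightarrow> real" where
  "initc m n A c i t =
     (if i < n then (if t = i then 1 else 0)
      else if t < n then A t (i - n)
      else if t < n + m \<and> t = i then c else 0)"

lemma init_basis_initc: "init_basis m n A = initc m n A (cfac m n 1)"
  by (intro ext) (simp add: init_basis_def initc_def)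

lemma lattice_scale:
  "Defs.lattice r (scale_basis m n b) =
     (\<lambda>v t. if n \<le> t then v t / 2 powr (real (m+n) / real m) else v t) ` Defs.lattice r b"
proof -
  let ?d = "2 powr (real (m+n) / real m)"
  have eq: "(\<lambda>t. \<Sum>i<r. of_int (c i) * scale_basis m n b i t)
      = (\<lambda>t. if n \<le> t then (\<lambda>t. \<Sum>i<r. of_int (c i) * b i t) t / ?d else (\<lambda>t. \<Sum>i<r. of_int (c i) * b i t) t)"
    for c :: "nat \<Rightarrow> int"
    by (intro ext) (auto simp: scale_basis_def sum_divide_distrib)
  show ?thesis unfolding Defs.lattice_def eq
  proof (rule Set.set_eqI, rule iffI)
    fix v assume "v \<in> {v. \<exists>c. v = (\<lambda>t. if n \<le> t then (\<Sum>i<r. real_of_int (c i) * b i t) / ?d else (\<Sum>i<r. real_of_int (c i) * b i t))}"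
    then obtain c where c: "v = (\<lambda>t. if n \<le> t then (\<Sum>i<r. real_of_int (c i) * b i t) / ?d else (\<Sum>i<r. real_of_int (c i) * b i t))" by blast
    show "v \<in> (\<lambda>v t. if n \<le> t then v t / ?d else v t) ` {v. \<exists>c. v = (\<lambda>t. \<Sum>i<r. real_of_int (c i) * b i t)}"
      by (rule image_eqI[where x="\<lambda>t. \<Sum>i<r. real_of_int (c i) * b i t"]) (auto simp: c)
  next
    fix v assume "v \<in> (\<lambda>v t. if n \<le> t then v t / ?d else v t) ` {v. \<exists>c. v = (\<lambda>t. \<Sum>i<r. real_of_int (c i) * b i t)}"
    then obtain c where c: "v = (\<lambda>t. if n \<le> t then (\<Sum>i<r. real_of_int (c i) * b i t) / ?d else (\<Sum>i<r. real_of_int (c i) * b i t))" by blast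
    then show "v \<in> {v. \<exists>c. v = (\<lambda>t. if n \<le> t then (\<Sum>i<r. real_of_int (c i) * b i t) / ?d else (\<Sum>i<r. real_of_int (c i) * b i t))}"
      by blast
  qed
qed

lemma scale_initc: "scale_basis m n (initc m n A c) = initc m n A (c / 2 powr (real (m+n) / real m))"
  by (intro ext) (auto simp: scale_basis_def initc_def)

lemma cfac_Suc: "cfac m n (Suc k) = cfac m n k / 2 powr (real (m+n) / real m)"
proof -
  have "cfac m n (Suc k) = 2 powr ((- (real (m+n) + 3) / 4 - real k) * (real (m+n) / real m))"
    unfolding cfac_def by (simp add: powr_powr)
  also have "\<dots> = 2 powr ((- (real (m+n) + 3) / 4 - real k + 1) * (real (m+n) / real m) - real (m+n) / real m)"
    by (simp add: algebra_simps)
  also have "\<dots> = cfac m n k / 2 powr (real (m+n) / real m)"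
    unfolding cfac_def by (simp add: powr_powr powr_diff)
  finally show ?thesis .
qed

lemma cfac_pos: "cfac m n k > 0" unfolding cfac_def by simp

lemma run_lattice:
  assumes run: "ILLL_run m n A qmax L qs" and k: "1 \<le> k" "int k \<le> kprime m n qmax"
  shows "Defs.lattice (m+n) (L k) = Defs.lattice (m+n) (initc m n A (cfac m n k))"
  using k
proof (induction k)
  case 0 then show ?case by simp
next
  case (Suc k)
  show ?case
  proof (cases "k = 0")
    case True
    then show ?thesis using run Suc.prems unfolding ILLL_run_def by (simp add: init_basis_initc)
  next
    case False
    then have IH: "Defs.lattice (m+n) (L k) = Defs.lattice (m+n) (initc m n A (cfac m n k))"
      using Suc by simp
    have "Defs.lattice (m+n) (L (Suc k)) = Defs.lattice (m+n) (scale_basis m n (L k))"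
      using run Suc.prems False unfolding ILLL_run_def by simp
    also have "\<dots> = Defs.lattice (m+n) (scale_basis m n (initc m n A (cfac m n k)))"
      unfolding lattice_scale IH ..
    also have "\<dots> = Defs.lattice (m+n) (initc m n A (cfac m n (Suc k)))"
      by (simp add: scale_initc cfac_Suc)
    finally show ?thesis .
  qed
qed

lemma det_initc: "det (Bm (m+n) (initc m n A c)) = c^m"
proof -
  have "upper_triangular (Bm (m+n) (initc m n A c))"
    unfolding upper_triangular_def Bm_def initc_def by auto
  then have "det (Bm (m+n) (initc m n A c)) = prod_list (diag_mat (Bm (m+n) (initc m n A c)))"
    using det_upper_triangular Bm_carrier by blast
  also have "\<dots> = (\<Prod>i=0..<m+n. if i < n then 1 else c)"
    unfolding prod_list_diag_prod Bm_def by (intro prod.cong) (auto simp: initc_def)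
  also have "\<dots> = (\<Prod>i=0..<n. if i < n then 1 else c) * (\<Prod>i=n..<m+n. if i < n then 1 else c)"
    by (rule prod.atLeastLessThan_concat[symmetric]) auto
  also have "\<dots> = (\<Prod>i=n..<m+n. c)" by (simp add: prod.cong)
  also have "\<dots> = c^m" by simp
  finally show ?thesis .
qed



lemma iter_facts:
  assumes m1: "1 \<le> m" and run: "ILLL_run m n A qmax L qs" and k: "1 \<le> k" "int k \<le> kprime m n qmax"
  defines "N \<equiv> ip (m+n) (L k 0) (L k 0)"
  shows "N ^ (m+n) \<le> 2 ^ (\<Sum>i<m+n. i) * (cfac m n k) ^ (2*m)"
    and "0 < N"
    and "\<And>v. v \<in> Defs.lattice (m+n) (initc m n A (cfac m n k)) \<Longrightarrow> (\<exists>t<m+n. v t \<noteq> 0)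
          \<Longrightarrow> N \<le> 2^(m+n-1) * ip (m+n) v v"
proof -
  let ?r = "m+n" and ?c = "cfac m n k" and ?b = "L k"
  have red: "reduced ?r ?b" using run k unfolding ILLL_run_def by blast
  have lat: "Defs.lattice ?r ?b = Defs.lattice ?r (initc m n A ?c)"
    using run_lattice[OF run k] .
  have dc: "det (Bm ?r (initc m n A ?c)) \<noteq> 0" using det_initc[of m n A ?c] cfac_pos[of m n k] by simp
  have prodg: "(\<Prod>i<?r. ip ?r (gso ?r ?b i) (gso ?r ?b i)) = ?c ^ (2*m)"
    using det_gso[of ?r ?b] lattice_det[OF lat dc] det_initc[of m n A ?c]
    by (simp add: power_mult[symmetric] mult.commute)
  have chain: "\<And>i. i < ?r \<Longrightarrow> N \<le> 2^i * ip ?r (gso ?r ?b i) (gso ?r ?b i)"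
    unfolding N_def using reduced_chain[OF red] by blast
  have N0: "0 \<le> N" unfolding N_def by (rule ip_nonneg)
  have "N ^ ?r = (\<Prod>i<?r. N)" by simp
  also have "\<dots> \<le> (\<Prod>i<?r. 2^i * ip ?r (gso ?r ?b i) (gso ?r ?b i))"
    by (rule prod_mono) (use N0 chain in auto)
  also have "\<dots> = (\<Prod>i<?r. (2::real)^i) * ?c ^ (2*m)"
    by (simp add: prod.distrib prodg)
  also have "(\<Prod>i<?r. (2::real)^i) = 2 ^ (\<Sum>i<?r. i)" by (simp add: power_sum)
  finally show "N ^ ?r \<le> 2 ^ (\<Sum>i<?r. i) * ?c ^ (2*m)" .
  have "?c ^ (2*m) > 0" using cfac_pos[of m n k] by simp
  then have "(\<Prod>i<?r. ip ?r (gso ?r ?b i) (gso ?r ?b i)) \<noteq> 0" using prodg cfac_pos[of m n k] by simp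
  then have "ip ?r (gso ?r ?b 0) (gso ?r ?b 0) \<noteq> 0"
  proof -
    have "0 \<in> {..<?r}" using m1 by simp
    then show ?thesis using \<open>(\<Prod>i<?r. ip ?r (gso ?r ?b i) (gso ?r ?b i)) \<noteq> 0\<close>
      by (metis (no_types, lifting) finite_lessThan prod_zero_iff)
  qed
  then show "0 < N" using N0 unfolding N_def by (simp add: gso_0)
  fix v assume v: "v \<in> Defs.lattice ?r (initc m n A ?c)" and nz: "\<exists>t<?r. v t \<noteq> 0"
  then have "v \<in> Defs.lattice ?r ?b" using lat by simp
  then obtain cc where cc: "v = (\<lambda>t. \<Sum>i<?r. of_int (cc i) * ?b i t)"
    unfolding Defs.lattice_def by blast
  have "\<exists>i<?r. cc i \<noteq> 0"
  proof (rule ccontr)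
    assume "\<not> (\<exists>i<?r. cc i \<noteq> 0)"
    then have "\<And>t. v t = 0" unfolding cc by simp
    then show False using nz by simp
  qed
  then show "N \<le> 2^(?r-1) * ip ?r v v" unfolding N_def by (rule lll_short[OF red cc])
qed



lemma double_sum_lessThan: "2 * real (\<Sum>i<r. i) = real r * (real r - 1)"
  by (induction r) (auto simp: algebra_simps)

lemma sum_split_add: "(\<Sum>i<(n::nat)+(m::nat). f i) = (\<Sum>i<n. f i) + (\<Sum>j<m. f (n+j))"
  by (induction m) (auto simp: add_ac)

lemma log2_pm: "B > 0 \<Longrightarrow> log 2 (2 powr a * B powr b) = a + b * log 2 B"
  by (simp add: log_mult_pos log_powr)

lemma log2_pmq: "B > 0 \<Longrightarrow> q > 0 \<Longrightarrow> log 2 (2 powr a * B powr b * q) = a + b * log 2 B + log 2 q"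
  by (simp add: log_mult_pos log_powr)

theorem theorem3:
  fixes m n :: nat and A :: "nat \<Rightarrow> nat \<Rightarrow> real" and qmax \<gamma> :: real
    and L :: "nat \<Rightarrow> nat \<Rightarrow> nat \<Rightarrow> real" and qs :: "nat \<Rightarrow> nat \<Rightarrow> int"
    and s :: "nat \<Rightarrow> int"
  assumes "m \<ge> 1" and "n \<ge> 1" and "qmax > 1" and "\<gamma> > 0"
    and run: "ILLL_run m n A qmax L qs"
    and hyp: "\<forall>k. 1 \<le> k \<and> int k \<le> kprime m n qmax \<longrightarrow>
         real_of_int (Max ((\<lambda>j. \<bar>qs k j\<bar>) ` {..<m})) powr (real m / real n)
         * Max ((\<lambda>i. dnint (\<Sum>j<m. of_int (qs k j) * A i j)) ` {..<n}) > \<gamma>"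
  defines "\<delta> \<equiv> 2 powr (- (real (m+n) * (real m ^ 2 + real m * (3 * real n - 1) + 4 * real n
                        + 2 * real n ^ 2)) / (4 * real n ^ 2))
              * real m powr (- real m / (2 * real n)) * real n powr (- 1 / 2)
              * \<gamma> powr (real (m+n) / real n)"
  defines "S \<equiv> real_of_int (Max ((\<lambda>j. \<bar>s j\<bar>) ` {..<m}))"
  assumes lower: "2 powr ((real (m+n) - 1) * real n / (4 * real m))
                   * (real n * \<delta>^2 / real m) powr (real n / (2 * real (m+n))) < S"
    and upper: "S < 2 powr (- (real m ^ 2 + real m * (real n - 1) + 4 * real n) / (4 * real m))
                   * (real n * \<delta>^2 / real m) powr (real n / (2 * real (m+n))) * qmax"
  shows "S powr (real m / real n) * Max ((\<lambda>i. dnint (\<Sum>j<m. of_int (s j) * A i j)) ` {..<n}) > \<delta>"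
proof (rule ccontr)
  define Es where "Es = Max ((\<lambda>i. dnint (\<Sum>j<m. of_int (s j) * A i j)) ` {..<n})"
  assume "\<not> S powr (real m / real n) * Max ((\<lambda>i. dnint (\<Sum>j<m. of_int (s j) * A i j)) ` {..<n}) > \<delta>"
  then have neg: "S powr (real m / real n) * Es \<le> \<delta>" unfolding Es_def by simp
  define M where "M = real m"
  define Nn where "Nn = real n"
  define r where "r = M + Nn"
  have M1: "M \<ge> 1" and N1: "Nn \<ge> 1" using assms(1,2) unfolding M_def Nn_def by auto
  have rmn: "real (m+n) = r" unfolding r_def M_def Nn_def by simp
  have dpos: "\<delta> > 0" unfolding \<delta>_def using assms(1,2,4) by simp
  have Spos: "S > 0"
  proof -
    have "0 < 2 powr ((real (m+n) - 1) * real n / (4 * real m))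
                   * (real n * \<delta>^2 / real m) powr (real n / (2 * real (m+n)))"
      using dpos assms(1,2) by simp
    then show ?thesis using lower by linarith
  qed
  define lS where "lS = log 2 S"
  define ld where "ld = log 2 \<delta>"
  define lg where "lg = log 2 \<gamma>"
  define lm where "lm = log 2 M"
  define ln' where "ln' = log 2 Nn"
  define lq where "lq = log 2 qmax"
  define lD where "lD = ln' + 2 * ld - lm"
  define X where "X = r * (M^2 + M * (3 * Nn - 1) + 4 * Nn + 2 * Nn^2) / (4 * Nn^2)"
  have ld_eq: "ld = - X - M / (2 * Nn) * lm - 1/2 * ln' + r / Nn * lg"
    unfolding ld_def \<delta>_def using assms(1,2,4)
    by (simp add: log_mult_pos log_powr lm_def ln'_def lg_def X_def r_def M_def Nn_def)
  have dD: "real n * \<delta>^2 / real m > 0" using dpos assms(1,2) by simp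
  have lD_eq: "log 2 (real n * \<delta>^2 / real m) = lD"
    unfolding lD_def ln'_def ld_def lm_def M_def Nn_def using dpos assms(1,2)
    by (simp add: log_mult_pos log_divide_pos log_nat_power)
  have lower_log: "lS > (r - 1) * Nn / (4 * M) + Nn / (2 * r) * lD"
  proof -
    have "log 2 (2 powr ((real (m+n) - 1) * real n / (4 * real m))
                   * (real n * \<delta>^2 / real m) powr (real n / (2 * real (m+n)))) < log 2 S"
      using lower dD Spos dpos assms(1,2) by (subst log_less_cancel_iff) auto
    moreover have "log 2 (2 powr ((real (m+n) - 1) * real n / (4 * real m))
                   * (real n * \<delta>^2 / real m) powr (real n / (2 * real (m+n))))
        = (r - 1) * Nn / (4 * M) + Nn / (2 * r) * lD"
      using log2_pm[OF dD] lD_eq unfolding rmn M_def[symmetric] Nn_def[symmetric] by simp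
    ultimately show ?thesis unfolding lS_def by simp
  qed
  have upper_log: "lS < - (M^2 + M * (Nn - 1) + 4 * Nn) / (4 * M) + Nn / (2 * r) * lD + lq"
  proof -
    have "log 2 S < log 2 (2 powr (- (real m ^ 2 + real m * (real n - 1) + 4 * real n) / (4 * real m))
                   * (real n * \<delta>^2 / real m) powr (real n / (2 * real (m+n))) * qmax)"
      using upper dD Spos assms(1,2,3) dpos by (subst log_less_cancel_iff) auto
    moreover have "log 2 (2 powr (- (real m ^ 2 + real m * (real n - 1) + 4 * real n) / (4 * real m))
                   * (real n * \<delta>^2 / real m) powr (real n / (2 * real (m+n))) * qmax)
        = - (M^2 + M * (Nn - 1) + 4 * Nn) / (4 * M) + Nn / (2 * r) * lD + lq"
      using log2_pmq[OF dD, of qmax] assms(3) lD_eq unfolding rmn M_def[symmetric] Nn_def[symmetric] lq_def by simp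
    ultimately show ?thesis unfolding lS_def by simp
  qed
  have Mpos: "M > 0" and Npos: "Nn > 0" and rpos: "r > 0" using M1 N1 unfolding r_def by auto
  define aS where "aS = M/Nn*lS"
  define aD where "aD = M/(2*r)*lD"
  define y where "y = 1 - (r+3)/4 - aD + aS"
  have y_pos: "y > 0"
  proof -
    have "M/Nn * lS > M/Nn * ((r - 1) * Nn / (4 * M) + Nn / (2 * r) * lD)"
      by (rule mult_strict_left_mono[OF lower_log]) (use Mpos Npos in simp)
    moreover have "M/Nn * ((r - 1) * Nn / (4 * M) + Nn / (2 * r) * lD) = (r-1)/4 + aD"
      using Mpos Npos rpos unfolding aD_def by (simp add: field_simps)
    ultimately have "aS > (r-1)/4 + aD" unfolding aS_def by linarith
    then show ?thesis unfolding y_def by (simp add: field_simps)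
  qed
  define k where "k = nat \<lceil>y\<rceil>"
  have kint: "int k = \<lceil>y\<rceil>" unfolding k_def using y_pos by simp
  have k1: "1 \<le> k" unfolding k_def using y_pos by linarith
  have ky: "y \<le> real k" "real k < y + 1"
  proof -
    have "real k = of_int \<lceil>y\<rceil>" using kint by (metis of_int_of_nat_eq)
    then show "y \<le> real k" "real k < y + 1" using ceiling_correct[of y] by linarith+
  qed
  have kk: "int k \<le> kprime m n qmax"
  proof -
    have "M/Nn * lS < M/Nn * (- (M^2 + M * (Nn - 1) + 4 * Nn) / (4 * M) + Nn / (2 * r) * lD + lq)"
      by (rule mult_strict_left_mono[OF upper_log]) (use Mpos Npos in simp)
    moreover have "M/Nn * (- (M^2 + M * (Nn - 1) + 4 * Nn) / (4 * M) + Nn / (2 * r) * lD + lq)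
        = - (M^2 + M * (Nn - 1) + 4 * Nn) / (4 * Nn) + aD + M*lq/Nn"
      using Mpos Npos rpos unfolding aD_def by (simp add: field_simps)
    moreover have "1 - (r+3)/4 - (M^2 + M * (Nn - 1) + 4 * Nn) / (4 * Nn) = - (r - 1) * r / (4 * Nn) - 1"
      using Npos unfolding r_def by (simp add: field_simps power2_eq_square)
    ultimately have "y \<le> - (r - 1) * r / (4 * Nn) + M * lq / Nn"
      unfolding y_def aS_def[symmetric] by linarith
    then have "\<lceil>y\<rceil> \<le> kprime m n qmax"
      unfolding kprime_def rmn lq_def[symmetric] M_def[symmetric] Nn_def[symmetric]
      by (intro ceiling_mono) (simp add: r_def)
    then show ?thesis using kint by simp
  qed
  define c where "c = cfac m n k"
  have cpos: "c > 0" unfolding c_def by (rule cfac_pos)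
  define w where "w = log 2 c"
  define lc0 where "lc0 = lD/2 - r/Nn*lS"
  have w_eq: "w = r/M * (- (r+3)/4 - real k + 1)"
    unfolding w_def c_def cfac_def rmn M_def[symmetric] by (simp add: log_powr)
  have lc0_eq: "r/M * (- (r+3)/4 - y + 1) = lc0"
    unfolding y_def lc0_def aD_def aS_def using Mpos Npos rpos by (simp add: field_simps)
  have w_le: "w \<le> lc0"
  proof -
    have "r/M * (- (r+3)/4 - real k + 1) \<le> r/M * (- (r+3)/4 - y + 1)"
      by (rule mult_left_mono) (use ky Mpos rpos in auto)
    then show ?thesis using w_eq lc0_eq by simp
  qed
  have w_gt: "w > lc0 - r/M"
  proof -
    have "r/M * (- (r+3)/4 - real k + 1) > r/M * (- (r+3)/4 - y)"
      by (rule mult_strict_left_mono) (use ky Mpos rpos in auto)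
    moreover have "r/M * (- (r+3)/4 - y) = r/M * (- (r+3)/4 - y + 1) - r/M"
      by (simp add: algebra_simps)
    ultimately show ?thesis using w_eq lc0_eq by simp
  qed
  define NN where "NN = ip (m+n) (L k 0) (L k 0)"
  note IF = iter_facts[OF assms(1) run k1 kk, folded NN_def c_def]
  define u where "u = log 2 NN"
  have NNpos: "NN > 0" using IF(2) .
  have sumr: "real (\<Sum>i<m+n. i) = r * (r - 1) / 2"
    using double_sum_lessThan[of "m+n"] unfolding rmn by simp
  have G2: "r * u \<le> r * (r - 1) / 2 + 2 * M * w"
  proof -
    have "log 2 (NN ^ (m+n)) \<le> log 2 (2 ^ (\<Sum>i<m+n. i) * c ^ (2*m))"
      using IF(1) NNpos cpos by (subst log_le_cancel_iff) auto
    moreover have "log 2 (NN ^ (m+n)) = r * u" unfolding u_def using NNpos rmn by (simp add: log_nat_power)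
    moreover have "log 2 (2 ^ (\<Sum>i<m+n. i) * c ^ (2*m)) = r * (r - 1) / 2 + 2 * M * w"
      using cpos unfolding w_def M_def sumr[symmetric]
      by (simp add: log_mult_pos log_nat_power)
    ultimately show ?thesis by simp
  qed
  define q where "q = qs k"
  define Q where "Q = real_of_int (Max ((\<lambda>j. \<bar>q j\<bar>) ` {..<m}))"
  define Eq where "Eq = Max ((\<lambda>i. dnint (\<Sum>j<m. of_int (q j) * A i j)) ` {..<n})"
  have hk: "Q powr (M/Nn) * Eq > \<gamma>" using hyp k1 kk unfolding Q_def Eq_def q_def M_def Nn_def by blast
  obtain p where p: "\<forall>t<m+n. L k 0 t = (if t < n then (\<Sum>j<m. of_int (q j) * A t j) - of_int (p t)
                      else c * of_int (q (t - n)))"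
    using run k1 kk unfolding ILLL_run_def q_def c_def by blast
  have trm: "(L k 0 t)^2 \<le> NN" if t: "t < m+n" for t
  proof -
    have "L k 0 t * L k 0 t \<le> (\<Sum>t'<m+n. L k 0 t' * L k 0 t')"
      by (rule member_le_sum) (use t in auto)
    then show ?thesis unfolding NN_def ip_def by (simp add: power2_eq_square)
  qed
  have "Eq \<in> (\<lambda>i. dnint (\<Sum>j<m. of_int (q j) * A i j)) ` {..<n}"
    unfolding Eq_def by (rule Max_in) (use assms(2) in \<open>auto simp: lessThan_empty_iff\<close>)
  then obtain i0 where i0: "i0 < n" "Eq = dnint (\<Sum>j<m. of_int (q j) * A i0 j)" by auto
  have Eq0: "Eq \<ge> 0" using i0 unfolding dnint_def by simp
  have "Eq \<le> \<bar>L k 0 i0\<bar>"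
    using i0 p round_diff_minimal[of "\<Sum>j<m. of_int (q j) * A i0 j" "p i0"] unfolding dnint_def by auto
  then have "Eq^2 \<le> (L k 0 i0)^2" using Eq0 by (metis power2_abs power_mono)
  then have EqN: "Eq^2 \<le> NN" using trm[of i0] i0 by simp
  have "Max ((\<lambda>j. \<bar>q j\<bar>) ` {..<m}) \<in> (\<lambda>j. \<bar>q j\<bar>) ` {..<m}"
    by (rule Max_in) (use assms(1) in \<open>auto simp: lessThan_empty_iff\<close>)
  then obtain j0 where j0: "j0 < m" "Q = \<bar>of_int (q j0)\<bar>" unfolding Q_def by auto
  have Q0: "Q \<ge> 0" using j0 by simp
  have "(L k 0 (n + j0))^2 = (c * Q)^2" using p j0 by (simp add: power_mult_distrib)
  then have QN: "(c * Q)^2 \<le> NN" using trm[of "n+j0"] j0 by simp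
  have Qpos: "Q > 0"
  proof (rule ccontr)
    assume "\<not> Q > 0" then have "Q = 0" using Q0 by simp
    then show False using hk assms(4) by simp
  qed
  have Eqpos: "Eq > 0"
  proof (rule ccontr)
    assume "\<not> Eq > 0" then have "Eq = 0" using Eq0 by simp
    then show False using hk assms(4) by simp
  qed
  define lQ where "lQ = log 2 Q"
  define lE where "lE = log 2 Eq"
  have L1: "lg < M/Nn * lQ + lE"
  proof -
    have "log 2 \<gamma> < log 2 (Q powr (M/Nn) * Eq)"
      using hk assms(4) Qpos Eqpos by (subst log_less_cancel_iff) auto
    then show ?thesis unfolding lg_def lQ_def lE_def using Qpos Eqpos by (simp add: log_mult_pos log_powr)
  qed
  have L2: "2 * lQ + 2 * w \<le> u"
  proof -
    have "log 2 ((c * Q)^2) \<le> log 2 NN" using QN Qpos cpos NNpos by (subst log_le_cancel_iff) auto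
    then show ?thesis unfolding lQ_def w_def u_def using Qpos cpos by (simp add: log_nat_power log_mult_pos)
  qed
  have L3: "2 * lE \<le> u"
  proof -
    have "log 2 (Eq^2) \<le> log 2 NN" using EqN Eqpos NNpos by (subst log_le_cancel_iff) auto
    then show ?thesis unfolding lE_def u_def using Eqpos by (simp add: log_nat_power)
  qed
  have G1: "2 * (Nn * lg) < M * u + Nn * u - 2 * (M * w)"
  proof -
    have a: "Nn * lg < Nn * (M/Nn * lQ + lE)" by (rule mult_strict_left_mono[OF L1 Npos])
    have b: "Nn * (M/Nn * lQ + lE) = M * lQ + Nn * lE" using Npos by (simp add: field_simps)
    have c: "M * (2 * lQ + 2 * w) \<le> M * u" by (rule mult_left_mono[OF L2]) (use Mpos in simp)
    have d: "Nn * (2 * lE) \<le> Nn * u" by (rule mult_left_mono[OF L3]) (use Npos in simp)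
    show ?thesis using a b c d by (simp add: algebra_simps)
  qed
  have Esi: "dnint (\<Sum>j<m. of_int (s j) * A i j) \<le> Es" if "i < n" for i
    unfolding Es_def by (rule Max_ge) (use that in auto)
  have Es0: "Es \<ge> 0" using Esi[of 0] assms(2) unfolding dnint_def by fastforce
  have Sj: "\<bar>real_of_int (s j)\<bar> \<le> S" if "j < m" for j
  proof -
    have "\<bar>s j\<bar> \<le> Max ((\<lambda>j. \<bar>s j\<bar>) ` {..<m})" by (rule Max_ge) (use that in auto)
    then show ?thesis unfolding S_def by linarith
  qed
  have "Max ((\<lambda>j. \<bar>s j\<bar>) ` {..<m}) \<in> (\<lambda>j. \<bar>s j\<bar>) ` {..<m}"
    by (rule Max_in) (use assms(1) in \<open>auto simp: lessThan_empty_iff\<close>)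
  then obtain j1 where j1: "j1 < m" "S = \<bar>of_int (s j1)\<bar>" unfolding S_def by auto
  have sj1: "s j1 \<noteq> 0" using j1 Spos by auto
  have Es_le: "Es \<le> \<delta> * S powr (- (M/Nn))"
  proof -
    have "S powr (M/Nn) * Es \<le> \<delta>" using neg unfolding M_def Nn_def .
    then have "Es \<le> \<delta> / S powr (M/Nn)" using Spos by (simp add: field_simps)
    then show ?thesis by (simp add: powr_minus_divide)
  qed
  define xv where "xv = (\<lambda>t. if t < n then (\<Sum>j<m. of_int (s j) * A t j) - of_int (round (\<Sum>j<m. of_int (s j) * A t j))
                         else if t < m + n then c * of_int (s (t - n)) else 0)"
  have xlat: "xv \<in> Defs.lattice (m+n) (initc m n A c)"
    unfolding Defs.lattice_def mem_Collect_eq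
  proof (intro exI[of _ "\<lambda>i. if i < n then - round (\<Sum>j<m. of_int (s j) * A i j) else s (i - n)"] ext)
    fix t
    let ?cc = "\<lambda>i. if i < n then - round (\<Sum>j<m. of_int (s j) * A i j) else s (i - n)"
    have "(\<Sum>i<m+n. real_of_int (?cc i) * initc m n A c i t)
        = (\<Sum>i<n. real_of_int (?cc i) * initc m n A c i t) + (\<Sum>j<m. real_of_int (?cc (n+j)) * initc m n A c (n+j) t)"
      by (subst add.commute) (rule sum_split_add)
    also have "(\<Sum>i<n. real_of_int (?cc i) * initc m n A c i t)
        = (\<Sum>i<n. if i = t then - of_int (round (\<Sum>j<m. of_int (s j) * A i j)) else 0)"
      by (rule sum.cong) (auto simp: initc_def)
    also have "\<dots> = (if t < n then - of_int (round (\<Sum>j<m. of_int (s j) * A t j)) else 0)"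
      by (simp add: sum.delta')
    also have "(\<Sum>j<m. real_of_int (?cc (n+j)) * initc m n A c (n+j) t)
        = (if t < n then (\<Sum>j<m. of_int (s j) * A t j) else if t < m + n then c * of_int (s (t - n)) else 0)"
    proof (cases "t < n")
      case True then show ?thesis by (auto simp: initc_def intro!: sum.cong)
    next
      case False
      have "(\<Sum>j<m. real_of_int (?cc (n+j)) * initc m n A c (n+j) t)
          = (\<Sum>j<m. if j = t - n then (if t < m + n then c * of_int (s j) else 0) else 0)"
        by (rule sum.cong) (use False in \<open>auto simp: initc_def\<close>)
      also have "\<dots> = (if t < m + n then c * of_int (s (t - n)) else 0)"
        using False by (auto simp: sum.delta')
      finally show ?thesis using False by simp
    qed
    finally show "xv t = (\<Sum>i<m+n. real_of_int (?cc i) * initc m n A c i t)"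
      unfolding xv_def by auto
  qed
  have xnz: "\<exists>t<m+n. xv t \<noteq> 0"
    by (rule exI[of _ "n + j1"]) (use j1 sj1 cpos in \<open>auto simp: xv_def\<close>)
  have NNx: "NN \<le> 2^(m+n-1) * ip (m+n) xv xv" using IF(3)[OF xlat xnz] .
  have ipx: "ip (m+n) xv xv \<le> Nn * Es^2 + M * (c^2 * S^2)"
  proof -
    have "ip (m+n) xv xv = (\<Sum>t<n. xv t * xv t) + (\<Sum>j<m. xv (n+j) * xv (n+j))"
      unfolding ip_def by (subst add.commute) (rule sum_split_add)
    also have "(\<Sum>t<n. xv t * xv t) \<le> (\<Sum>t<n. Es^2)"
    proof (rule sum_mono)
      fix t assume t: "t \<in> {..<n}"
      have "xv t * xv t = (dnint (\<Sum>j<m. of_int (s j) * A t j))^2"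
        using t unfolding xv_def dnint_def by (simp add: power2_eq_square)
      also have "\<dots> \<le> Es^2" using Esi[of t] t by (intro power_mono) (auto simp: dnint_def)
      finally show "xv t * xv t \<le> Es^2" .
    qed
    also have "(\<Sum>j<m. xv (n+j) * xv (n+j)) \<le> (\<Sum>j<m. c^2 * S^2)"
    proof (rule sum_mono)
      fix j assume j: "j \<in> {..<m}"
      have "xv (n+j) * xv (n+j) = c^2 * (of_int (s j))^2"
        using j unfolding xv_def by (simp add: power2_eq_square)
      also have "\<dots> \<le> c^2 * S^2"
      proof -
        have a: "\<bar>real_of_int (s j)\<bar> \<le> S" using Sj[of j] j by simp
        have "\<bar>real_of_int (s j)\<bar>^2 \<le> S^2" by (rule power_mono[OF a]) simp
        then have "(of_int (s j))^2 \<le> S^2" by simp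
        then show ?thesis by (intro mult_left_mono) auto
      qed
      finally show "xv (n+j) * xv (n+j) \<le> c^2 * S^2" .
    qed
    finally show ?thesis unfolding M_def Nn_def by simp
  qed
  define T where "T = Nn * \<delta>^2 * S powr (- (2 * M / Nn))"
  have EsT: "Nn * Es^2 \<le> T"
  proof -
    have "Es^2 \<le> (\<delta> * S powr (- (M/Nn)))^2" using Es_le Es0 by (intro power_mono) auto
    also have "\<dots> = \<delta>^2 * S powr (- (2 * M / Nn))"
      using Spos by (simp add: power_mult_distrib powr_realpow[symmetric] powr_powr mult.commute)
    finally show ?thesis unfolding T_def using Npos by simp
  qed
  have Tpos: "T > 0" unfolding T_def using Npos dpos Spos by simp
  have logT: "log 2 T = ln' + 2 * ld - 2 * aS"
    unfolding T_def ln'_def ld_def aS_def lS_def using Npos dpos Spos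
    by (simp add: log_mult_pos log_nat_power log_powr)
  have cT: "M * (c^2 * S^2) \<le> T"
  proof -
    have e1: "log 2 (M * (c^2 * S^2)) = lm + 2 * w + 2 * lS"
      unfolding lm_def w_def lS_def using Mpos cpos Spos by (simp add: log_mult_pos log_nat_power)
    have e2: "r/Nn*lS = lS + aS" unfolding r_def aS_def using Npos by (simp add: field_simps)
    have "2 * w \<le> ln' + 2 * ld - lm - 2 * (r/Nn*lS)" using w_le Npos unfolding lc0_def lD_def by (simp add: field_simps)
    then have "log 2 (M * (c^2 * S^2)) \<le> log 2 T" unfolding e1 logT e2 by simp
    then show ?thesis using Mpos cpos Spos Tpos by (subst (asm) log_le_cancel_iff) auto
  qed
  have G3: "u \<le> r + ln' + 2 * ld - 2 * aS"
  proof -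
    have "NN \<le> 2^(m+n-1) * (2 * T)" using NNx ipx EsT cT
      by (smt (verit) mult_left_mono zero_le_power)
    then have "log 2 NN \<le> log 2 (2^(m+n-1) * (2 * T))" using NNpos Tpos by (subst log_le_cancel_iff) auto
    moreover have "log 2 (2^(m+n-1) * (2 * T)) = real (m+n-1) + 1 + log 2 T"
      using Tpos by (simp add: log_mult_pos log_nat_power)
    moreover have "real (m+n-1) = r - 1" using assms(1) rmn by (simp add: of_nat_diff)
    ultimately show ?thesis unfolding u_def logT by simp
  qed
  have G2': "2*(r*u) \<le> r*(r-1) + 4*(M*w)" using G2 by (simp add: field_simps)
  have ru: "r*u = M*u + Nn*u" unfolding r_def by (simp add: algebra_simps)
  have F1: "4*(Nn*lg) < r*(r-1)" using G1 G2' ru by linarith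
  have F1': "M/Nn*(4*(Nn*lg)) < M/Nn*(r*(r-1))" by (rule mult_strict_left_mono[OF F1]) (use Mpos Npos in simp)
  have F1'': "M/Nn*(4*(Nn*lg)) = 4*(M*lg)" "M/Nn*(r*(r-1)) = M*(r*(r-1))/Nn" using Npos by (simp_all add: field_simps)
  have A1: "r*u \<le> r*(r + ln' + 2*ld - 2*aS)" using mult_left_mono[OF G3, of r] rpos by simp
  have A2: "M*(lc0 - r/M) < M*w" using mult_strict_left_mono[OF w_gt Mpos] .
  have A3: "M*(lc0 - r/M) = M*lc0 - r" using Mpos by (simp add: field_simps)
  have A4: "r*(r + ln' + 2*ld - 2*aS) - 2*(M*lc0) + 2*r = r*r + 2*r + Nn*ln' + 2*(Nn*ld) + M*lm"
    unfolding aS_def lc0_def lD_def r_def using Npos by (simp add: field_simps)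
  have A5: "2*(Nn*ld) = -2*(Nn*X) - M*lm - Nn*ln' + 2*(r*lg)"
    unfolding ld_eq using Npos by (simp add: field_simps)
  have A6: "2*(2*(Nn*X) - r*r - 2*r) = M*(r*(r-1))/Nn"
    unfolding X_def r_def using Npos by (simp add: field_simps power2_eq_square)
  have rlg: "r*lg = M*lg + Nn*lg" unfolding r_def by (simp add: algebra_simps)
  have "2*(Nn*lg) < r*u - 2*(M*w)" using G1 ru by linarith
  then have "2*(Nn*lg) < r*r + 2*r + Nn*ln' + 2*(Nn*ld) + M*lm" using A1 A2 A3 A4 by linarith
  then have "2*(Nn*lg) < r*r + 2*r - 2*(Nn*X) + 2*(r*lg)" using A5 by linarith
  define Z where "Z = M*(r*(r-1))/Nn"
  define V where "V = r*r"
  define W where "W = Nn*X"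
  define G where "G = M*lg"
  define H where "H = Nn*lg"
  have h1: "2*H < V + 2*r - 2*W + 2*(G + H)"
    using \<open>2*(Nn*lg) < r*r + 2*r - 2*(Nn*X) + 2*(r*lg)\<close> rlg unfolding V_def W_def G_def H_def by simp
  have h2: "2*(2*W - V - 2*r) = Z" using A6 unfolding Z_def V_def W_def .
  have h3: "4*G < Z" using F1' F1'' unfolding Z_def G_def by simp
  show False using h1 h2 h3 by (smt (verit))
qed

end
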